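(* Let $\mathcal{X}=\mathcal{X}^{(1)}\times\cdots\times\mathcal{X}^{(d)}$ with each $\mathcal{X}^{(l)}$ finite, fix $i\in\{1,\dots,d\}$, let $\pi=\otimes_{l=1}^d\pi^{(l)}$ be a positive product distribution, let $P\in\mathcal{L}(\mathcal{X})$ be $\pi$-stationary and, for $j\ne i$, let $L_j\in\mathcal{L}(\mathcal{X}^{(j)})$ be $\pi^{(j)}$-stationary. Let $K_i:=\{(\otimes_{j<i}L_j)\otimes M\otimes(\otimes_{j>i}L_j):\ M\in\mathcal{L}(\mathcal{X}^{(i)})\ \pi^{(i)}\text{-stationary}\}$, each element identified with its edge measure $(\pi\boxtimes Q)(x,y)=\pi(x)Q(x,y)$. Let $f(t)=-\ln t$. Let $(X_n)_{n\ge1}$ be a Markov chain with transition matrix $P$ and arbitrary initial distribution, and $E_n:=\frac1n\big(\sum_{k=1}^{n-1}\delta_{(X_k,X_{k+1})}+\delta_{(X_n,X_1)}\big)$. Then $\limsup_{n\to\infty}\frac1n\ln\mathbb{P}(E_n\in K_i)\le-D_f^\pi\big(P\,\|\,(\otimes_{j<i}L_j)\otimes L^{(i)}_*\otimes(\otimes_{j>i}L_j)\big)$, where $L_*^{(i)}(x^i,y^i)\propto\prod_{x^{(-i)},y^{(-i)}}P(x,y)^{\pi(x)\mathbf{Z}(x^{(-i)},y^{(-i)})/Z(x^i,y^i)}$ (normalized over $y^i$), with $\mathbf{Z}(x^{(-i)},y^{(-i)})=\prod_{j\ne i}L_j(x^j,y^j)$ and $Z(x^i,y^i)=\sum_{x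^{(-i)},y^{(-i)}}\pi(x)\mathbf{Z}(x^{(-i)},y^{(-i)})$.
   Context: $\mathcal{L}(\Omega)$: transition matrices on finite $\Omega$. $D_f^{\pi}(M\|L):=\sum_{x}\pi(x)\sum_y L(x,y)f\big(M(x,y)/L(x,y)\big)$ with conventions $0f(0/0)=0$, $0f(a/0)=a\lim_{t\to0^+}tf(1/t)$; for $f=-\ln$ this is the reverse KL divergence $\sum_{x,y}\pi(x)L(x,y)\ln\frac{L(x,y)}{M(x,y)}$. $(\otimes_jL_j)(x,y)=\prod_jL_j(x^j,y^j)$; $x^{(-i)}=(x^j)_{j\ne i}$. $P$ is $\pi$-stationary if $\pi P=\pi$. $L^{(i)}_*$ is the unique minimizer over $L\in\mathcal{L}(\mathcal{X}^{(i)})$ of $D_f^\pi(P\|(\otimes_{j<i}L_j)\otimes L\otimes(\otimes_{j>i}L_j))$. *)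

theory Defs
  imports "HOL-Analysis.Analysis"
begin

text \<open>Finite product state space X = X^(0) x ... x X^(d-1) (coordinates indexed by 0..<d),
  states are extensional functions in PiE.\<close>

definition prod_space :: "nat \<Rightarrow> (nat \<Rightarrow> 'a set) \<Rightarrow> (nat \<Rightarrow> 'a) set" where
  "prod_space d S = PiE {..<d} S"

definition is_trans :: "'s set \<Rightarrow> ('s \<Rightarrow> 's \<Rightarrow> real) \<Rightarrow> bool" where
  "is_trans A Q \<longleftrightarrow> (\<forall>x\<in>A. \<forall>y\<in>A. 0 \<le> Q x y) \<and> (\<forall>x\<in>A. (\<Sum>y\<in>A. Q x y) = 1)"

definition is_stationary :: "'s set \<Rightarrow> ('s \<Rightarrow> real) \<Rightarrow> ('s \<Rightarrow> 's \<Rightarrow> real) \<Rightarrow> bool" where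
  "is_stationary A p Q \<longleftrightarrow> (\<forall>y\<in>A. (\<Sum>x\<in>A. p x * Q x y) = p y)"

definition is_distr :: "'s set \<Rightarrow> ('s \<Rightarrow> real) \<Rightarrow> bool" where
  "is_distr A p \<longleftrightarrow> (\<forall>x\<in>A. 0 \<le> p x) \<and> (\<Sum>x\<in>A. p x) = 1"

definition tensor :: "nat \<Rightarrow> (nat \<Rightarrow> 'a \<Rightarrow> 'a \<Rightarrow> real) \<Rightarrow> (nat \<Rightarrow> 'a) \<Rightarrow> (nat \<Rightarrow> 'a) \<Rightarrow> real" where
  "tensor d Ls x y = (\<Prod>j<d. Ls j (x j) (y j))"

definition prod_distr :: "nat \<Rightarrow> (nat \<Rightarrow> 'a \<Rightarrow> real) \<Rightarrow> (nat \<Rightarrow> 'a) \<Rightarrow> real" where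
  "prod_distr d pis x = (\<Prod>l<d. pis l (x l))"

text \<open>D_f^pi(M || L) for f = -ln, i.e. the reverse KL divergence
  sum_{x,y} pi(x) L(x,y) ln(L(x,y)/M(x,y)), with the conventions 0 f(0/0) = 0 and
  0 f(a/0) = a lim_{t->0+} t f(1/t) = 0 (terms with L(x,y) = 0 vanish); a term with
  L(x,y) > 0 = M(x,y) is +infinity (since f(0) = -ln 0 = +infinity).\<close>
definition rev_kl :: "'s set \<Rightarrow> ('s \<Rightarrow> real) \<Rightarrow> ('s \<Rightarrow> 's \<Rightarrow> real) \<Rightarrow> ('s \<Rightarrow> 's \<Rightarrow> real) \<Rightarrow> ereal" where
  "rev_kl A p M L = (\<Sum>x\<in>A. \<Sum>y\<in>A.
      (if p x * L x y = 0 then 0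
       else if M x y = 0 then \<infinity>
       else ereal (p x * L x y * ln (L x y / M x y))))"

definition eln :: "real \<Rightarrow> ereal" where
  "eln t = (if t \<le> 0 then -\<infinity> else ereal (ln t))"

definition emp_edge :: "nat \<Rightarrow> (nat \<Rightarrow> 's) \<Rightarrow> 's \<Rightarrow> 's \<Rightarrow> real" where
  "emp_edge n xs a b =
     (real (card {k\<in>{1..<n}. xs k = a \<and> xs (Suc k) = b})
      + (if xs n = a \<and> xs 1 = b then 1 else 0)) / real n"

definition mc_prob :: "'s set \<Rightarrow> ('s \<Rightarrow> real) \<Rightarrow> ('s \<Rightarrow> 's \<Rightarrow> real) \<Rightarrow> nat \<Rightarrow> ((nat \<Rightarrow> 's) \<Rightarrow> bool) \<Rightarrow> real" where
  "mc_prob A mu P n E =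
     (\<Sum>xs\<in>{xs \<in> PiE {1..n} (\<lambda>_. A). E xs}. mu (xs 1) * (\<Prod>k\<in>{1..<n}. P (xs k) (xs (Suc k))))"

definition in_K :: "nat \<Rightarrow> (nat \<Rightarrow> 'a set) \<Rightarrow> (nat \<Rightarrow> 'a \<Rightarrow> real) \<Rightarrow> (nat \<Rightarrow> 'a \<Rightarrow> 'a \<Rightarrow> real)
     \<Rightarrow> nat \<Rightarrow> ((nat \<Rightarrow> 'a) \<Rightarrow> (nat \<Rightarrow> 'a) \<Rightarrow> real) \<Rightarrow> bool" where
  "in_K d S pis Ls i Em \<longleftrightarrow>
     (\<exists>M. is_trans (S i) M \<and> is_stationary (S i) (pis i) M \<and>
        (\<forall>x\<in>prod_space d S. \<forall>y\<in>prod_space d S.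
            Em x y = prod_distr d pis x * tensor d (Ls(i := M)) x y))"

end

theory Submission
  imports Defs
begin

lemma trans_le1:
  assumes "finite A" "is_trans A Q" "x \<in> A" "y \<in> A"
  shows "Q x y \<le> 1"
proof -
  have "Q x y \<le> (\<Sum>z\<in>A. Q x z)"
    using assms by (intro member_le_sum) (auto simp: is_trans_def)
  also have "\<dots> = 1" using assms by (auto simp: is_trans_def)
  finally show ?thesis .
qed

lemma tensor_trans:
  assumes fin: "\<forall>l<d. finite (S l)" and tr: "\<forall>j<d. is_trans (S j) (L j)"
  shows "is_trans (prod_space d S) (tensor d L)"
  unfolding is_trans_def
proof safe
  fix x y assume x: "x \<in> prod_space d S" and y: "y \<in> prod_space d S"
  show "0 \<le> tensor d L x y"
    unfolding tensor_def using x y tr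
    by (intro prod_nonneg) (auto simp: prod_space_def is_trans_def PiE_iff)
next
  fix x assume x: "x \<in> prod_space d S"
  have "(\<Sum>y\<in>prod_space d S. tensor d L x y) = (\<Prod>j<d. \<Sum>b\<in>S j. L j (x j) b)"
    unfolding tensor_def prod_space_def
    by (rule prod_sum_PiE[symmetric]) (use fin in auto)
  also have "\<dots> = 1"
    using x tr by (intro prod.neutral) (auto simp: prod_space_def is_trans_def PiE_iff)
  finally show "(\<Sum>y\<in>prod_space d S. tensor d L x y) = 1" .
qed

lemma path_sum:
  assumes fA: "finite A" and Q: "is_trans A Q" and mu: "is_distr A mu"
  shows "(\<Sum>xs\<in>PiE {1..Suc n} (\<lambda>_. A). mu (xs 1) * (\<Prod>k\<in>{1..<Suc n}. Q (xs k) (xs (Suc k)))) = 1"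
proof (induction n)
  case 0
  have ins: "{1..Suc 0} = insert (1::nat) {}" by auto
  have "(\<Sum>xs\<in>PiE {1..Suc 0} (\<lambda>_. A). mu (xs 1) * (\<Prod>k\<in>{1..<Suc 0}. Q (xs k) (xs (Suc k))))
      = (\<Sum>(y,g)\<in>A \<times> PiE ({}::nat set) (\<lambda>_. A). mu ((g(1:=y)) 1))"
    unfolding ins PiE_insert_eq
    by (subst sum.reindex[OF inj_combinator]) (auto simp: split_beta)
  also have "\<dots> = (\<Sum>a\<in>A. mu a)"
    by (simp add: sum.cartesian_product[symmetric])
  finally show ?case using mu by (simp add: is_distr_def)
next
  case (Suc n)
  define m where "m = Suc (Suc n)"
  define w where "w xs = mu (xs 1) * (\<Prod>k\<in>{1..<Suc n}. Q (xs k) (xs (Suc k)))" for xs :: "nat \<Rightarrow> _"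
  have ins: "{1..Suc (Suc n)} = insert m {1..Suc n}" by (auto simp: m_def)
  have mn: "m \<notin> {1..Suc n}" by (auto simp: m_def)
  define F where "F xs = mu (xs 1) * (\<Prod>k\<in>{1..<Suc (Suc n)}. Q (xs k) (xs (Suc k)))" for xs :: "nat \<Rightarrow> _"
  have "(\<Sum>xs\<in>PiE {1..Suc (Suc n)} (\<lambda>_. A). mu (xs 1) * (\<Prod>k\<in>{1..<Suc (Suc n)}. Q (xs k) (xs (Suc k))))
     = (\<Sum>xs\<in>PiE {1..Suc (Suc n)} (\<lambda>_. A). F xs)" by (simp add: F_def)
  also have "\<dots> = (\<Sum>p\<in>A \<times> PiE {1..Suc n} (\<lambda>_. A). F (case p of (y,g) \<Rightarrow> g(m:=y)))"
    unfolding ins PiE_insert_eq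
    by (subst sum.reindex[OF inj_combinator[OF mn]]) (simp add: comp_def)
  also have "\<dots> = (\<Sum>(y,g)\<in>A \<times> PiE {1..Suc n} (\<lambda>_. A). mu ((g(m:=y)) 1) * (\<Prod>k\<in>{1..<Suc (Suc n)}. Q ((g(m:=y)) k) ((g(m:=y)) (Suc k))))"
    by (simp add: F_def split_beta)
  also have "\<dots> = (\<Sum>(y,g)\<in>A \<times> PiE {1..Suc n} (\<lambda>_. A). w g * Q (g (Suc n)) y)"
  proof (rule sum.cong[OF refl], clarify)
    fix y g
    have "{1..<Suc (Suc n)} = insert (Suc n) {1..<Suc n}" by auto
    then have "(\<Prod>k\<in>{1..<Suc (Suc n)}. Q ((g(m:=y)) k) ((g(m:=y)) (Suc k)))
        = Q (g (Suc n)) y * (\<Prod>k\<in>{1..<Suc n}. Q ((g(m:=y)) k) ((g(m:=y)) (Suc k)))"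
      by (simp add: m_def)
    also have "(\<Prod>k\<in>{1..<Suc n}. Q ((g(m:=y)) k) ((g(m:=y)) (Suc k)))
        = (\<Prod>k\<in>{1..<Suc n}. Q (g k) (g (Suc k)))"
      by (rule prod.cong) (auto simp: m_def)
    finally show "mu ((g(m:=y)) 1) * (\<Prod>k\<in>{1..<Suc (Suc n)}. Q ((g(m:=y)) k) ((g(m:=y)) (Suc k)))
        = w g * Q (g (Suc n)) y"
      by (simp add: w_def m_def)
  qed
  also have "\<dots> = (\<Sum>g\<in>PiE {1..Suc n} (\<lambda>_. A). \<Sum>y\<in>A. w g * Q (g (Suc n)) y)"
    by (subst sum.cartesian_product[symmetric]) (rule sum.swap)
  also have "\<dots> = (\<Sum>g\<in>PiE {1..Suc n} (\<lambda>_. A). w g)"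
  proof (rule sum.cong[OF refl])
    fix g assume "g \<in> PiE {1..Suc n} (\<lambda>_. A)"
    then have "g (Suc n) \<in> A" by auto
    then show "(\<Sum>y\<in>A. w g * Q (g (Suc n)) y) = w g"
      using Q by (simp add: sum_distrib_left[symmetric] is_trans_def)
  qed
  also have "\<dots> = 1" using Suc by (simp add: w_def)
  finally show ?case .
qed



definition cnt :: "nat \<Rightarrow> (nat \<Rightarrow> 's) \<Rightarrow> 's \<Rightarrow> 's \<Rightarrow> nat" where
  "cnt n xs x y = card {k\<in>{1..<n}. xs k = x \<and> xs (Suc k) = y}"

lemma count_sum:
  assumes fA: "finite A" and xs: "\<forall>k\<in>{1..n}. xs k \<in> A"
  shows "(\<Sum>k\<in>{1..<n}. f (xs k) (xs (Suc k))) = (\<Sum>x\<in>A. \<Sum>y\<in>A. real (cnt n xs x y) * f x y)"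
proof -
  have img: "(\<lambda>k. (xs k, xs (Suc k))) ` {1..<n} \<subseteq> A \<times> A" using xs by auto
  have "(\<Sum>k\<in>{1..<n}. f (xs k) (xs (Suc k)))
      = (\<Sum>p\<in>A \<times> A. \<Sum>k\<in>{k. k \<in> {1..<n} \<and> (xs k, xs (Suc k)) = p}. f (xs k) (xs (Suc k)))"
    by (rule sum.group[symmetric]) (use fA img in auto)
  also have "\<dots> = (\<Sum>p\<in>A \<times> A. real (cnt n xs (fst p) (snd p)) * f (fst p) (snd p))"
  proof (rule sum.cong[OF refl])
    fix p :: "'a \<times> 'a"
    have "(\<Sum>k\<in>{k. k \<in> {1..<n} \<and> (xs k, xs (Suc k)) = p}. f (xs k) (xs (Suc k)))
        = (\<Sum>k\<in>{k\<in>{1..<n}. xs k = fst p \<and> xs (Suc k) = snd p}. f (fst p) (snd p))"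
      by (rule sum.cong) auto
    then show "(\<Sum>k\<in>{k. k \<in> {1..<n} \<and> (xs k, xs (Suc k)) = p}. f (xs k) (xs (Suc k)))
        = real (cnt n xs (fst p) (snd p)) * f (fst p) (snd p)"
      by (simp add: cnt_def)
  qed
  also have "\<dots> = (\<Sum>x\<in>A. \<Sum>y\<in>A. real (cnt n xs x y) * f x y)"
    by (simp add: sum.cartesian_product split_beta)
  finally show ?thesis .
qed

lemma cnt_pos:
  assumes "k \<in> {1..<n}"
  shows "1 \<le> cnt n xs (xs k) (xs (Suc k))"
proof -
  define Sk where "Sk = {j\<in>{1..<n}. xs j = xs k \<and> xs (Suc j) = xs (Suc k)}"
  have "k \<in> Sk" using assms by (auto simp: Sk_def)
  moreover have "finite Sk" by (auto simp: Sk_def)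
  ultimately have "card Sk \<noteq> 0" by (auto simp: card_eq_0_iff)
  moreover have "cnt n xs (xs k) (xs (Suc k)) = card Sk" by (simp add: cnt_def Sk_def)
  ultimately show ?thesis by linarith
qed

lemma cnt_pos_ex:
  assumes "0 < cnt n xs x y"
  shows "\<exists>k\<in>{1..<n}. xs k = x \<and> xs (Suc k) = y"
proof (rule ccontr)
  assume "\<not> ?thesis"
  then have "{k\<in>{1..<n}. xs k = x \<and> xs (Suc k) = y} = {}" by auto
  then have "cnt n xs x y = 0" unfolding cnt_def by (metis card.empty)
  then show False using assms by simp
qed

lemma cnt_le: "cnt n xs x y \<le> n - 1"
proof -
  have "cnt n xs x y \<le> card {1..<n}" unfolding cnt_def by (rule card_mono) auto
  then show ?thesis by simp
qed

lemma emp_edge_cnt: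
  "emp_edge n xs x y = (real (cnt n xs x y) + (if xs n = x \<and> xs 1 = y then 1 else 0)) / real n"
  by (simp add: emp_edge_def cnt_def)

locale tctx =
  fixes d i :: nat
    and S :: "nat \<Rightarrow> 'a set"
    and pis :: "nat \<Rightarrow> 'a \<Rightarrow> real"
    and P :: "(nat \<Rightarrow> 'a) \<Rightarrow> (nat \<Rightarrow> 'a) \<Rightarrow> real"
    and Ls :: "nat \<Rightarrow> 'a \<Rightarrow> 'a \<Rightarrow> real"
    and Lstar :: "'a \<Rightarrow> 'a \<Rightarrow> real"
    and mu :: "(nat \<Rightarrow> 'a) \<Rightarrow> real"
  assumes fin: "\<forall>l<d. finite (S l) \<and> S l \<noteq> {}"
    and i: "i < d"
    and pis_distr: "\<forall>l<d. is_distr (S l) (pis l)"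
    and pis_pos: "\<forall>l<d. \<forall>a\<in>S l. 0 < pis l a"
    and P_trans: "is_trans (prod_space d S) P"
    and Ls_trans: "\<forall>j<d. j \<noteq> i \<longrightarrow> is_trans (S j) (Ls j)"
    and Lstar_trans: "is_trans (S i) Lstar"
    and Lstar_min: "\<forall>L. is_trans (S i) L \<longrightarrow>
          rev_kl (prod_space d S) (prod_distr d pis) P (tensor d (Ls(i := Lstar)))
            \<le> rev_kl (prod_space d S) (prod_distr d pis) P (tensor d (Ls(i := L)))"
    and mu_distr: "is_distr (prod_space d S) mu"
begin

definition "A = prod_space d S"
definition "pp = prod_distr d pis"
definition "Z x y = (\<Prod>j\<in>{..<d}-{i}. Ls j (x j) (y j))"
definition "c0 = Min (insert 1 {pp x * Z x y |x y. x\<in>A \<and> y\<in>A \<and> 0 < pp x * Z x y})"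
definition "pmin = Min (insert 1 {P x y |x y. x\<in>A \<and> y\<in>A \<and> 0 < P x y})"
definition "L0 = - ln pmin"
definition "K = card A * card A"
definition "C1 = L0 + 2 * K * (L0 + 2) / c0"
definition "C2 = K / c0"

lemma finA: "finite A"
  using fin by (auto simp: A_def prod_space_def intro!: finite_PiE)

lemma memA: "x \<in> A \<Longrightarrow> l < d \<Longrightarrow> x l \<in> S l"
  by (auto simp: A_def prod_space_def)

lemma pp_pos: "x \<in> A \<Longrightarrow> 0 < pp x"
  using pis_pos memA by (auto simp: pp_def prod_distr_def intro!: prod_pos)

lemma pis_le1: "l < d \<Longrightarrow> a \<in> S l \<Longrightarrow> pis l a \<le> 1"
proof -
  assume l: "l < d" and a: "a \<in> S l"
  have "pis l a \<le> (\<Sum>b\<in>S l. pis l b)"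
    using pis_distr fin l a by (intro member_le_sum) (auto simp: is_distr_def)
  then show ?thesis using pis_distr l by (auto simp: is_distr_def)
qed

lemma pp_le1: "x \<in> A \<Longrightarrow> pp x \<le> 1"
  unfolding pp_def prod_distr_def
  by (rule prod_le_1) (use pis_pos pis_le1 memA in \<open>auto intro: less_imp_le\<close>)

lemma tensor_split: "tensor d (Ls(i:=L)) x y = L (x i) (y i) * Z x y"
proof -
  have "{..<d} = insert i ({..<d} - {i})" using i by auto
  then have "tensor d (Ls(i:=L)) x y = (\<Prod>j\<in>insert i ({..<d} - {i}). (Ls(i:=L)) j (x j) (y j))"
    by (simp add: tensor_def)
  also have "\<dots> = L (x i) (y i) * (\<Prod>j\<in>{..<d} - {i}. (Ls(i:=L)) j (x j) (y j))"
    by (subst prod.insert) auto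
  also have "(\<Prod>j\<in>{..<d} - {i}. (Ls(i:=L)) j (x j) (y j)) = Z x y"
    unfolding Z_def by (rule prod.cong) auto
  finally show ?thesis .
qed

lemma T_trans: "is_trans (S i) L \<Longrightarrow> is_trans A (tensor d (Ls(i:=L)))"
  unfolding A_def using fin Ls_trans by (intro tensor_trans) auto

lemma Z_nonneg: "x \<in> A \<Longrightarrow> y \<in> A \<Longrightarrow> 0 \<le> Z x y"
  unfolding Z_def using Ls_trans memA by (intro prod_nonneg) (auto simp: is_trans_def)

lemma Z_le1: "x \<in> A \<Longrightarrow> y \<in> A \<Longrightarrow> Z x y \<le> 1"
  unfolding Z_def using Ls_trans memA fin
  by (intro prod_le_1) (auto simp: is_trans_def intro: trans_le1)

lemma P_nonneg: "x \<in> A \<Longrightarrow> y \<in> A \<Longrightarrow> 0 \<le> P x y"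
  using P_trans by (auto simp: is_trans_def A_def)

lemma P_le1: "x \<in> A \<Longrightarrow> y \<in> A \<Longrightarrow> P x y \<le> 1"
  using P_trans finA by (intro trans_le1[of A]) (auto simp: A_def)

lemma T_nonneg: "is_trans (S i) L \<Longrightarrow> x \<in> A \<Longrightarrow> y \<in> A \<Longrightarrow> 0 \<le> tensor d (Ls(i:=L)) x y"
  using T_trans by (auto simp: is_trans_def)

lemma T_le1: "is_trans (S i) L \<Longrightarrow> x \<in> A \<Longrightarrow> y \<in> A \<Longrightarrow> tensor d (Ls(i:=L)) x y \<le> 1"
  by (rule trans_le1[OF finA T_trans])

lemma c0_pos: "0 < c0"
proof -
  have "finite {pp x * Z x y |x y. x\<in>A \<and> y\<in>A \<and> 0 < pp x * Z x y}"
  proof -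
    have "{pp x * Z x y |x y. x\<in>A \<and> y\<in>A \<and> 0 < pp x * Z x y} \<subseteq> (\<lambda>(x,y). pp x * Z x y) ` (A \<times> A)"
      by auto
    then show ?thesis using finA finite_subset by blast
  qed
  then show ?thesis unfolding c0_def by (subst Min_gr_iff) auto
qed

lemma c0_le: "x \<in> A \<Longrightarrow> y \<in> A \<Longrightarrow> 0 < pp x * Z x y \<Longrightarrow> c0 \<le> pp x * Z x y"
proof -
  assume xy: "x \<in> A" "y \<in> A" "0 < pp x * Z x y"
  have "{pp x * Z x y |x y. x\<in>A \<and> y\<in>A \<and> 0 < pp x * Z x y} \<subseteq> (\<lambda>(x,y). pp x * Z x y) ` (A \<times> A)"
    by auto
  then have "finite {pp x * Z x y |x y. x\<in>A \<and> y\<in>A \<and> 0 < pp x * Z x y}"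
    using finA finite_subset by blast
  then show ?thesis unfolding c0_def by (intro Min_le) (use xy in auto)
qed

lemma pmin_pos: "0 < pmin"
proof -
  have "{P x y |x y. x\<in>A \<and> y\<in>A \<and> 0 < P x y} \<subseteq> (\<lambda>(x,y). P x y) ` (A \<times> A)" by auto
  then have "finite {P x y |x y. x\<in>A \<and> y\<in>A \<and> 0 < P x y}" using finA finite_subset by blast
  then show ?thesis unfolding pmin_def by (subst Min_gr_iff) auto
qed

lemma pmin_le: "x \<in> A \<Longrightarrow> y \<in> A \<Longrightarrow> 0 < P x y \<Longrightarrow> pmin \<le> P x y"
proof -
  assume xy: "x \<in> A" "y \<in> A" "0 < P x y"
  have "{P x y |x y. x\<in>A \<and> y\<in>A \<and> 0 < P x y} \<subseteq> (\<lambda>(x,y). P x y) ` (A \<times> A)" by auto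
  then have "finite {P x y |x y. x\<in>A \<and> y\<in>A \<and> 0 < P x y}" using finA finite_subset by blast
  then show ?thesis unfolding pmin_def by (intro Min_le) (use xy in auto)
qed

lemma pmin_le1: "pmin \<le> 1"
proof -
  have "{P x y |x y. x\<in>A \<and> y\<in>A \<and> 0 < P x y} \<subseteq> (\<lambda>(x,y). P x y) ` (A \<times> A)" by auto
  then have "finite {P x y |x y. x\<in>A \<and> y\<in>A \<and> 0 < P x y}" using finA finite_subset by blast
  then show ?thesis unfolding pmin_def by (intro Min_le) auto
qed

lemma L0_nonneg: "0 \<le> L0"
  using pmin_pos pmin_le1 by (simp add: L0_def)

lemma ln_P_ge: "x \<in> A \<Longrightarrow> y \<in> A \<Longrightarrow> 0 < P x y \<Longrightarrow> - L0 \<le> ln (P x y)"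
  using pmin_le pmin_pos by (simp add: L0_def)

end



lemma sum2_delta:
  assumes "finite A" "a \<in> A" "b \<in> A"
  shows "(\<Sum>x\<in>A. \<Sum>y\<in>A. (if a = x \<and> b = y then 1 else 0) * f x y) = (f a b :: real)"
proof -
  have "(\<Sum>x\<in>A. \<Sum>y\<in>A. (if a = x \<and> b = y then 1 else 0) * f x y)
      = (\<Sum>x\<in>A. if a = x then (\<Sum>y\<in>A. if b = y then f x y else 0) else 0)"
    by (rule sum.cong) (auto intro!: sum.cong)
  also have "\<dots> = f a b" using assms by simp
  finally show ?thesis .
qed

context tctx
begin

lemma path_bound:
  fixes n :: nat and xs :: "nat \<Rightarrow> nat \<Rightarrow> 'a" and M
  assumes n1: "1 \<le> n" and nbig: "2 / c0 \<le> real n" and xs: "xs \<in> PiE {1..n} (\<lambda>_. A)"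
    and M: "is_trans (S i) M"
    and E: "\<forall>x\<in>A. \<forall>y\<in>A. emp_edge n xs x y = pp x * tensor d (Ls(i:=M)) x y"
    and Ppos: "\<forall>k\<in>{1..<n}. 0 < P (xs k) (xs (Suc k))"
  shows "\<exists>L \<rho>. is_trans (S i) L \<and> rev_kl A pp P (tensor d (Ls(i:=L))) = ereal \<rho> \<and>
     (\<Prod>k\<in>{1..<n}. P (xs k) (xs (Suc k)))
       \<le> exp (C1 + C2 * ln (real n) - real n * \<rho>) * (\<Prod>k\<in>{1..<n}. tensor d (Ls(i:=M)) (xs k) (xs (Suc k)))"
proof -
  define T where "T = tensor d (Ls(i:=M))"
  define N' where "N' x y = real (cnt n xs x y)" for x y
  define \<delta> where "\<delta> x y = (if xs n = x \<and> xs 1 = y then 1 else 0::real)" for x y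
  define lg where "lg x y = ln (P x y) - ln (T x y)" for x y
  have xsA: "\<And>k. k \<in> {1..n} \<Longrightarrow> xs k \<in> A" using xs by auto
  have wA: "xs n \<in> A" "xs 1 \<in> A" using n1 xsA by auto
  have npos: "0 < real n" using n1 by simp
  have Neq: "\<And>x y. x\<in>A \<Longrightarrow> y\<in>A \<Longrightarrow> N' x y + \<delta> x y = n * (pp x * T x y)"
  proof -
    fix x y assume "x \<in> A" "y \<in> A"
    then have "(real (cnt n xs x y) + (if xs n = x \<and> xs 1 = y then 1 else 0)) / real n = pp x * T x y"
      using E by (simp add: emp_edge_cnt T_def)
    then show "N' x y + \<delta> x y = n * (pp x * T x y)"
      using npos by (simp add: N'_def \<delta>_def field_simps)
  qed
  have N'0: "\<And>x y. 0 \<le> N' x y" by (simp add: N'_def)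
  have \<delta>0: "\<And>x y. 0 \<le> \<delta> x y" by (simp add: \<delta>_def)
  have T0: "\<And>x y. x\<in>A \<Longrightarrow> y\<in>A \<Longrightarrow> 0 \<le> T x y" using T_nonneg[OF M] by (simp add: T_def)
  have T1: "\<And>x y. x\<in>A \<Longrightarrow> y\<in>A \<Longrightarrow> T x y \<le> 1" using T_le1[OF M] by (simp add: T_def)
  have N'P: "\<And>x y. 0 < N' x y \<Longrightarrow> 0 < P x y"
  proof -
    fix x y assume "0 < N' x y"
    then have "0 < cnt n xs x y" by (simp add: N'_def)
    then obtain k where "k\<in>{1..<n}" "xs k = x" "xs (Suc k) = y" using cnt_pos_ex[of n xs x y] by auto
    then show "0 < P x y" using Ppos by auto
  qed
  have NT: "\<And>x y. x\<in>A \<Longrightarrow> y\<in>A \<Longrightarrow> 0 < N' x y + \<delta> x y \<Longrightarrow> 0 < T x y"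
  proof -
    fix x y assume xy: "x\<in>A" "y\<in>A" "0 < N' x y + \<delta> x y"
    then have "T x y \<noteq> 0" using Neq[OF xy(1,2)] by auto
    then show "0 < T x y" using T0[OF xy(1,2)] by simp
  qed
  have Tek: "\<And>k. k\<in>{1..<n} \<Longrightarrow> 0 < T (xs k) (xs (Suc k))"
  proof -
    fix k assume k: "k \<in> {1..<n}"
    have "1 \<le> N' (xs k) (xs (Suc k))" using cnt_pos[OF k, of xs] by (simp add: N'_def)
    then show "0 < T (xs k) (xs (Suc k))"
      using NT[of "xs k" "xs (Suc k)"] xsA k \<delta>0[of "xs k" "xs (Suc k)"] by auto
  qed
  have prodeq: "(\<Prod>k\<in>{1..<n}. P (xs k) (xs (Suc k)))
      = exp (\<Sum>k\<in>{1..<n}. lg (xs k) (xs (Suc k))) * (\<Prod>k\<in>{1..<n}. T (xs k) (xs (Suc k)))"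
  proof -
    have "(\<Prod>k\<in>{1..<n}. P (xs k) (xs (Suc k)))
        = (\<Prod>k\<in>{1..<n}. exp (lg (xs k) (xs (Suc k))) * T (xs k) (xs (Suc k)))"
    proof (rule prod.cong[OF refl])
      fix k assume k: "k \<in> {1..<n}"
      then have "0 < P (xs k) (xs (Suc k))" "0 < T (xs k) (xs (Suc k))" using Ppos Tek by auto
      then show "P (xs k) (xs (Suc k)) = exp (lg (xs k) (xs (Suc k))) * T (xs k) (xs (Suc k))"
        by (simp add: lg_def exp_diff)
    qed
    then show ?thesis by (simp add: prod.distrib exp_sum)
  qed
  have Slin: "(\<Sum>k\<in>{1..<n}. lg (xs k) (xs (Suc k))) = (\<Sum>x\<in>A. \<Sum>y\<in>A. N' x y * lg x y)"
    unfolding N'_def by (rule count_sum[OF finA]) (use xsA in auto)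
  have lnn: "0 \<le> ln (real n)" using n1 by simp
  have C2n: "0 \<le> C2 * ln (real n)" using c0_pos lnn by (simp add: C2_def)
  have C1L: "L0 \<le> C1" using c0_pos L0_nonneg by (simp add: C1_def K_def)
  have key: "\<exists>L \<rho>. is_trans (S i) L \<and> rev_kl A pp P (tensor d (Ls(i:=L))) = ereal \<rho> \<and>
      (\<Sum>x\<in>A. \<Sum>y\<in>A. N' x y * lg x y) \<le> C1 + C2 * ln (real n) - real n * \<rho>"
  proof (cases "0 < P (xs n) (xs 1)")
    case True
    define \<rho> where "\<rho> = (\<Sum>x\<in>A. \<Sum>y\<in>A. if pp x * T x y = 0 then 0 else pp x * T x y * ln (T x y / P x y))"
    have TP: "0 < P x y \<and> 0 < T x y" if xy: "x\<in>A" "y\<in>A" "pp x * T x y \<noteq> 0" for x y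
    proof -
      have Tp: "0 < T x y" using T0[OF xy(1,2)] xy(3) by (cases "T x y = 0") auto
      then have "0 < N' x y + \<delta> x y" using Neq[OF xy(1,2)] pp_pos[OF xy(1)] npos by simp
      then have "0 < N' x y \<or> (xs n = x \<and> xs 1 = y)" by (auto simp: \<delta>_def split: if_splits)
      then show ?thesis using N'P True Tp by auto
    qed
    have rk: "rev_kl A pp P T = ereal \<rho>"
      unfolding rev_kl_def \<rho>_def sum_ereal[symmetric]
      by (intro sum.cong refl) (auto dest: TP)
    have split: "(\<Sum>x\<in>A. \<Sum>y\<in>A. (N' x y + \<delta> x y) * lg x y)
        = (\<Sum>x\<in>A. \<Sum>y\<in>A. N' x y * lg x y) + (\<Sum>x\<in>A. \<Sum>y\<in>A. \<delta> x y * lg x y)"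
      by (simp add: distrib_right sum.distrib)
    have dl: "(\<Sum>x\<in>A. \<Sum>y\<in>A. \<delta> x y * lg x y) = lg (xs n) (xs 1)"
      unfolding \<delta>_def by (rule sum2_delta[OF finA wA])
    have full: "(\<Sum>x\<in>A. \<Sum>y\<in>A. (N' x y + \<delta> x y) * lg x y) = - (n * \<rho>)"
    proof -
      have "(\<Sum>x\<in>A. \<Sum>y\<in>A. (N' x y + \<delta> x y) * lg x y)
          = (\<Sum>x\<in>A. \<Sum>y\<in>A. - (n * (if pp x * T x y = 0 then 0 else pp x * T x y * ln (T x y / P x y))))"
      proof (intro sum.cong refl)
        fix x y assume xy: "x \<in> A" "y \<in> A"
        show "(N' x y + \<delta> x y) * lg x y
            = - (n * (if pp x * T x y = 0 then 0 else pp x * T x y * ln (T x y / P x y)))"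
        proof (cases "pp x * T x y = 0")
          case True then show ?thesis using Neq[OF xy] by simp
        next
          case False
          then have "0 < P x y" "0 < T x y" using TP[OF xy] by auto
          then show ?thesis using Neq[OF xy] False by (simp add: lg_def ln_div algebra_simps)
        qed
      qed
      also have "\<dots> = - (n * \<rho>)"
        by (simp add: \<rho>_def sum_negf sum_distrib_left)
      finally show ?thesis .
    qed
    have Tw: "0 < T (xs n) (xs 1)"
      using NT[OF wA] N'0[of "xs n" "xs 1"] by (simp add: \<delta>_def)
    have "ln (T (xs n) (xs 1)) \<le> 0" using T1[OF wA] Tw by simp
    then have "- lg (xs n) (xs 1) \<le> L0"
      using ln_P_ge[OF wA True] by (simp add: lg_def)
    then have "(\<Sum>x\<in>A. \<Sum>y\<in>A. N' x y * lg x y) \<le> C1 + C2 * ln (real n) - real n * \<rho>"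
      using split dl full C1L C2n by linarith
    then show ?thesis using M rk unfolding T_def by blast
  next
    case False
    have Pw: "P (xs n) (xs 1) = 0" using False P_nonneg[OF wA] by simp
    define \<alpha> where "\<alpha> = xs n i"
    define \<beta> where "\<beta> = xs 1 i"
    define m where "m = M \<alpha> \<beta>"
    have \<alpha>S: "\<alpha> \<in> S i" using memA[OF wA(1) i] by (simp add: \<alpha>_def)
    have \<beta>S: "\<beta> \<in> S i" using memA[OF wA(2) i] by (simp add: \<beta>_def)
    have m0: "0 \<le> m" using M \<alpha>S \<beta>S by (simp add: is_trans_def m_def)
    have Teq: "\<And>x y. T x y = M (x i) (y i) * Z x y" by (simp add: T_def tensor_split)
    have N'w: "N' (xs n) (xs 1) = 0"
      using N'P[of "xs n" "xs 1"] Pw N'0[of "xs n" "xs 1"] by linarith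
    have hm: "real n * (pp (xs n) * Z (xs n) (xs 1)) * m = 1"
      using Neq[OF wA] N'w by (simp add: \<delta>_def Teq m_def \<alpha>_def \<beta>_def algebra_simps)
    have ppZ0: "0 \<le> pp (xs n) * Z (xs n) (xs 1)"
      using pp_pos[OF wA(1)] Z_nonneg[OF wA] by simp
    have ppZpos: "0 < pp (xs n) * Z (xs n) (xs 1)"
    proof -
      have "pp (xs n) * Z (xs n) (xs 1) \<noteq> 0" using hm by auto
      then show ?thesis using ppZ0 by linarith
    qed
    have mpos: "0 < m"
    proof -
      have "m \<noteq> 0" using hm by auto
      then show ?thesis using m0 by linarith
    qed
    have c0le: "c0 \<le> pp (xs n) * Z (xs n) (xs 1)" using c0_le[OF wA ppZpos] .
    have nm: "real n * m \<le> 1 / c0"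
    proof -
      have "real n * m * c0 \<le> real n * m * (pp (xs n) * Z (xs n) (xs 1))"
        using c0le npos mpos by (intro mult_left_mono) auto
      also have "\<dots> = 1" using hm by (simp add: algebra_simps)
      finally show ?thesis using c0_pos by (simp add: field_simps)
    qed
    have mhalf: "m \<le> 1/2"
    proof -
      have "m * (2 / c0) \<le> m * real n" using nbig m0 by (intro mult_left_mono) auto
      also have "\<dots> \<le> 1 / c0" using nm by (simp add: algebra_simps)
      finally have "m * 2 \<le> 1" using c0_pos by (simp add: field_simps)
      then show ?thesis by simp
    qed
    define M' where "M' a b = (if a = \<alpha> then (if b = \<beta> then 0 else M \<alpha> b / (1 - m)) else M a b)" for a b
    have M'tr: "is_trans (S i) M'"
      unfolding is_trans_def
    proof safe
      fix a b assume "a \<in> S i" "b \<in> S i"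
      then show "0 \<le> M' a b" using M mhalf \<alpha>S by (auto simp: M'_def is_trans_def)
    next
      fix a assume a: "a \<in> S i"
      show "(\<Sum>b\<in>S i. M' a b) = 1"
      proof (cases "a = \<alpha>")
        case True
        have finS: "finite (S i)" using fin i by auto
        have "(\<Sum>b\<in>S i. M' a b) = M' a \<beta> + (\<Sum>b\<in>S i - {\<beta>}. M' a b)"
          by (rule sum.remove[OF finS \<beta>S])
        also have "(\<Sum>b\<in>S i - {\<beta>}. M' a b) = (\<Sum>b\<in>S i - {\<beta>}. M \<alpha> b / (1 - m))"
          by (rule sum.cong) (auto simp: M'_def True)
        also have "\<dots> = (\<Sum>b\<in>S i - {\<beta>}. M \<alpha> b) / (1 - m)"
          by (simp add: sum_divide_distrib)
        also have "(\<Sum>b\<in>S i - {\<beta>}. M \<alpha> b) = (\<Sum>b\<in>S i. M \<alpha> b) - M \<alpha> \<beta>"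
          using sum.remove[OF finS \<beta>S, of "M \<alpha>"] by simp
        also have "\<dots> = 1 - m" using M \<alpha>S by (simp add: is_trans_def m_def)
        finally show ?thesis using mhalf by (simp add: M'_def True)
      next
        case False
        then show ?thesis using M a by (simp add: M'_def is_trans_def)
      qed
    qed
    define T' where "T' = tensor d (Ls(i:=M'))"
    have T'eq: "\<And>x y. T' x y = M' (x i) (y i) * Z x y" by (simp add: T'_def tensor_split)
    have T'a: "\<And>x y. x i \<noteq> \<alpha> \<Longrightarrow> T' x y = T x y" by (simp add: T'eq Teq M'_def)
    have T'b: "\<And>x y. x i = \<alpha> \<Longrightarrow> y i \<noteq> \<beta> \<Longrightarrow> T' x y = T x y / (1 - m)"
      by (simp add: T'eq Teq M'_def)
    have T'c: "\<And>x y. x i = \<alpha> \<Longrightarrow> y i = \<beta> \<Longrightarrow> T' x y = 0" by (simp add: T'eq M'_def)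
    have Tc: "\<And>x y. x i = \<alpha> \<Longrightarrow> y i = \<beta> \<Longrightarrow> T x y = m * Z x y" by (simp add: Teq m_def)
    have notw: "\<And>x y. x i \<noteq> \<alpha> \<or> y i \<noteq> \<beta> \<Longrightarrow> \<delta> x y = 0"
      by (auto simp: \<delta>_def \<alpha>_def \<beta>_def)
    have T'0: "\<And>x y. x\<in>A \<Longrightarrow> y\<in>A \<Longrightarrow> 0 \<le> T' x y" using T_nonneg[OF M'tr] by (simp add: T'_def)
    have T'P: "0 < P x y \<and> 0 < T x y \<and> 0 < T' x y" if xy: "x\<in>A" "y\<in>A" "pp x * T' x y \<noteq> 0" for x y
    proof -
      have T'p: "0 < T' x y" using T'0[OF xy(1,2)] xy(3) by (cases "T' x y = 0") auto
      have nc: "x i \<noteq> \<alpha> \<or> y i \<noteq> \<beta>" using T'c T'p by fastforce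
      have Tp: "0 < T x y"
      proof (cases "x i = \<alpha>")
        case True
        then have "y i \<noteq> \<beta>" using nc by simp
        then have "T x y = T' x y * (1 - m)" using T'b[of x y] True mhalf by (simp add: field_simps)
        then show ?thesis using T'p mhalf by simp
      next
        case False
        then show ?thesis using T'a T'p by simp
      qed
      have "0 < N' x y + \<delta> x y" using Neq[OF xy(1,2)] pp_pos[OF xy(1)] npos Tp by simp
      then have "0 < N' x y" using notw[of x y] nc by simp
      then show ?thesis using N'P Tp T'p by auto
    qed
    define \<rho> where "\<rho> = (\<Sum>x\<in>A. \<Sum>y\<in>A. if pp x * T' x y = 0 then 0 else pp x * T' x y * ln (T' x y / P x y))"
    have rk: "rev_kl A pp P T' = ereal \<rho>"
      unfolding rev_kl_def \<rho>_def sum_ereal[symmetric]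
      by (intro sum.cong refl) (auto dest: T'P)
    define Eb where "Eb = (2 * (L0 + 2) + ln (real n)) / c0"
    have Eb0: "0 \<le> Eb" using L0_nonneg lnn c0_pos by (simp add: Eb_def)
    have Eb1: "2 * (L0 + 2) / c0 \<le> Eb" using lnn c0_pos by (simp add: Eb_def divide_right_mono)
    have Eb2: "ln (real n) / c0 \<le> Eb" using L0_nonneg c0_pos by (simp add: Eb_def divide_right_mono)
    have tm: "N' x y * lg x y \<le> - (real n * (if pp x * T' x y = 0 then 0 else pp x * T' x y * ln (T' x y / P x y))) + Eb"
      if xy: "x\<in>A" "y\<in>A" for x y
    proof -
      have Tx0: "0 \<le> T x y" using T0[OF xy] .
      have ppx: "0 < pp x" "pp x \<le> 1" using pp_pos pp_le1 xy by auto
      have pT1: "pp x * T x y \<le> T x y" using ppx Tx0 by (intro mult_left_le_one_le) auto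
      show ?thesis
      proof (cases "x i = \<alpha> \<and> y i = \<beta>")
        case True
        then have T'z: "T' x y = 0" using T'c by auto
        show ?thesis
        proof (cases "N' x y = 0")
          case True then show ?thesis using T'z Eb0 by simp
        next
          case False
          then have N'p: "0 < N' x y" using N'0[of x y] by linarith
          then have "0 < cnt n xs x y" by (simp add: N'_def)
          then have N'1: "1 \<le> N' x y" by (simp add: N'_def)
          have Pp: "0 < P x y" using N'P[OF N'p] .
          have Tp: "0 < T x y" by (rule NT[OF xy]) (use N'p \<delta>0[of x y] in linarith)
          have "1 \<le> real n * (pp x * T x y)" using Neq[OF xy] N'1 \<delta>0[of x y] by linarith
          also have "\<dots> \<le> real n * T x y" using pT1 npos by (intro mult_left_mono) auto
          finally have nT: "1 \<le> real n * T x y" .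
          then have "1 / real n \<le> T x y" using npos by (simp add: field_simps)
          then have "ln (1 / real n) \<le> ln (T x y)" using npos Tp by (subst ln_le_cancel_iff) auto
          then have lnT: "- ln (real n) \<le> ln (T x y)" using npos by (simp add: ln_div)
          have "ln (P x y) \<le> 0" using Pp P_le1[OF xy] by simp
          then have lgle: "lg x y \<le> ln (real n)" using lnT by (simp add: lg_def)
          have ppZ1: "pp x * Z x y \<le> 1" using ppx Z_nonneg[OF xy] Z_le1[OF xy] by (intro mult_le_one) auto
          have ppZ0': "0 \<le> pp x * Z x y" using ppx Z_nonneg[OF xy] by simp
          have "N' x y \<le> N' x y + \<delta> x y" using \<delta>0[of x y] by simp
          also have "\<dots> = (real n * m) * (pp x * Z x y)" using Neq[OF xy] Tc True by (simp add: algebra_simps)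
          also have "\<dots> \<le> real n * m" using ppZ1 npos mpos by (intro mult_left_le) auto
          also have "\<dots> \<le> 1 / c0" using nm .
          finally have N'le: "N' x y \<le> 1 / c0" .
          have "N' x y * lg x y \<le> N' x y * ln (real n)" by (rule mult_left_mono[OF lgle N'0])
          also have "\<dots> \<le> (1 / c0) * ln (real n)" by (rule mult_right_mono[OF N'le lnn])
          also have "\<dots> \<le> Eb" using Eb2 by simp
          finally show ?thesis using T'z by simp
        qed
      next
        case False
        then have nc: "x i \<noteq> \<alpha> \<or> y i \<noteq> \<beta>" by simp
        have Nx: "N' x y = real n * (pp x * T x y)" using Neq[OF xy] notw[of x y] nc by simp
        show ?thesis
        proof (cases "T x y = 0")
          case True
          then have "T' x y = 0" using T'a[of x y] T'b[of x y] nc by (cases "x i = \<alpha>") auto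
          then show ?thesis using Nx True Eb0 by simp
        next
          case False
          then have Tp: "0 < T x y" using Tx0 by simp
          have N'p: "0 < N' x y" using Nx Tp ppx npos by simp
          have Pp: "0 < P x y" using N'P[OF N'p] .
          have lgd: "ln (T x y / P x y) = - lg x y" using Tp Pp by (simp add: lg_def ln_div)
          show ?thesis
          proof (cases "x i = \<alpha>")
            case False
            then have "T' x y = T x y" using T'a by simp
            then show ?thesis using Nx Tp ppx Eb0 lgd by (simp add: algebra_simps)
          next
            case True
            then have yb: "y i \<noteq> \<beta>" using nc by simp
            have T'v: "T' x y = T x y / (1 - m)" using T'b True yb by simp
            have m1: "0 < 1 - m" using mhalf by simp
            have T'p: "0 < T' x y" using T'v Tp m1 by simp
            have lnd: "ln (T' x y / P x y) = - lg x y - ln (1 - m)"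
              using Tp Pp m1 by (simp add: T'v lg_def ln_div ln_mult)
            define u where "u = real n * (pp x * T x y)"
            have u0: "0 \<le> u" using npos ppx Tx0 by (simp add: u_def)
            have "pp x * T x y \<le> 1" using pT1 T1[OF xy] by simp
            then have un: "u \<le> real n" using npos unfolding u_def by (intro mult_left_le) auto
            have "u * m \<le> real n * m" using un m0 by (rule mult_right_mono)
            then have um: "u * m \<le> 1 / c0" using nm by simp
            have "ln (T x y) \<le> 0" using Tp T1[OF xy] by simp
            then have lgge: "- L0 \<le> lg x y" using ln_P_ge[OF xy Pp] by (simp add: lg_def)
            have "m * (2 * m) \<le> m * 1" using mhalf m0 by (intro mult_left_mono) auto
            then have "2 * m\<^sup>2 \<le> m" by (simp add: power2_eq_square algebra_simps)
              then have q: "- 2 * m \<le> ln (1 - m)"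
              using ln_one_minus_pos_lower_bound[OF m0 mhalf] by linarith
            have "m * (- L0) \<le> m * lg x y" by (rule mult_left_mono[OF lgge m0])
            then have s1: "- (m * (L0 + 2)) \<le> ln (1 - m) + m * lg x y" using q by (simp add: algebra_simps)
            have "u * (- (m * (L0 + 2))) \<le> u * (ln (1 - m) + m * lg x y)" by (rule mult_left_mono[OF s1 u0])
            then have s2: "- (u * m * (L0 + 2)) \<le> u * ln (1 - m) + u * m * lg x y" by (simp add: algebra_simps)
            have "u * m * (L0 + 2) \<le> (1 / c0) * (L0 + 2)" using um L0_nonneg by (intro mult_right_mono) auto
            then have s3: "u * m * (L0 + 2) \<le> (L0 + 2) / c0" by simp
            have "Eb * (1 / 2) \<le> Eb * (1 - m)" using Eb0 mhalf by (intro mult_left_mono) auto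
            moreover have "2 * (L0 + 2) / c0 = 2 * ((L0 + 2) / c0)" by simp
            ultimately have s4: "(L0 + 2) / c0 \<le> Eb * (1 - m)" using Eb1 by linarith
            have key2: "u * lg x y * (1 - m) \<le> u * (lg x y + ln (1 - m)) + Eb * (1 - m)"
            proof -
              have "u * lg x y * (1 - m) = u * lg x y - u * m * lg x y" by (simp add: algebra_simps)
              moreover have "u * (lg x y + ln (1 - m)) = u * lg x y + u * ln (1 - m)" by (simp add: algebra_simps)
              ultimately show ?thesis using s2 s3 s4 by argo
            qed
            then have "u * lg x y \<le> (u * (lg x y + ln (1 - m)) + Eb * (1 - m)) / (1 - m)"
              using m1 by (simp add: pos_le_divide_eq)
            also have "\<dots> = u * (lg x y + ln (1 - m)) / (1 - m) + Eb"
              using m1 by (simp add: add_divide_distrib)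
            also have "u * (lg x y + ln (1 - m)) / (1 - m)
                = - (real n * (pp x * T' x y * (- lg x y - ln (1 - m))))"
              using m1 by (simp add: T'v u_def field_simps)
            also have "\<dots> = - (real n * (pp x * T' x y * ln (T' x y / P x y)))"
              by (simp only: lnd)
            finally show ?thesis using Nx T'p ppx by (simp add: u_def)
          qed
        qed
      qed
    qed
    have "(\<Sum>x\<in>A. \<Sum>y\<in>A. N' x y * lg x y)
        \<le> (\<Sum>x\<in>A. \<Sum>y\<in>A. - (real n * (if pp x * T' x y = 0 then 0 else pp x * T' x y * ln (T' x y / P x y))) + Eb)"
      by (intro sum_mono) (use tm in auto)
    also have "\<dots> = (\<Sum>x\<in>A. \<Sum>y\<in>A. - (real n * (if pp x * T' x y = 0 then 0 else pp x * T' x y * ln (T' x y / P x y)))) + (\<Sum>x\<in>A. \<Sum>y\<in>A. Eb)"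
      by (simp only: sum.distrib)
    also have "(\<Sum>x\<in>A. \<Sum>y\<in>A. - (real n * (if pp x * T' x y = 0 then 0 else pp x * T' x y * ln (T' x y / P x y)))) = - (real n * \<rho>)"
      unfolding \<rho>_def by (simp only: sum_negf sum_distrib_left)
    also have "(\<Sum>x\<in>A. \<Sum>y\<in>A. Eb) = real K * Eb"
      by (simp add: K_def)
    also have "real K * Eb = 2 * K * (L0 + 2) / c0 + C2 * ln (real n)"
      using c0_pos by (simp add: Eb_def C2_def add_divide_distrib algebra_simps)
    finally have "(\<Sum>x\<in>A. \<Sum>y\<in>A. N' x y * lg x y) \<le> C1 + C2 * ln (real n) - real n * \<rho>"
      using L0_nonneg by (simp add: C1_def)
    then show ?thesis using M'tr rk unfolding T'_def by blast
  qed
  then obtain L \<rho> where L: "is_trans (S i) L" "rev_kl A pp P (tensor d (Ls(i:=L))) = ereal \<rho>"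
    and S: "(\<Sum>x\<in>A. \<Sum>y\<in>A. N' x y * lg x y) \<le> C1 + C2 * ln (real n) - real n * \<rho>"
    by blast
  have "(\<Prod>k\<in>{1..<n}. P (xs k) (xs (Suc k)))
       \<le> exp (C1 + C2 * ln (real n) - real n * \<rho>) * (\<Prod>k\<in>{1..<n}. T (xs k) (xs (Suc k)))"
  proof -
    have "exp (\<Sum>k\<in>{1..<n}. lg (xs k) (xs (Suc k))) \<le> exp (C1 + C2 * ln (real n) - real n * \<rho>)"
      using S Slin by simp
    moreover have "0 \<le> (\<Prod>k\<in>{1..<n}. T (xs k) (xs (Suc k)))"
      by (rule prod_nonneg) (use Tek in force)
    ultimately show ?thesis unfolding prodeq by (rule mult_right_mono)
  qed
  then show ?thesis using L unfolding T_def by blast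
qed

end



context tctx
begin

definition "Ev n = {xs \<in> PiE {1..n} (\<lambda>_. A). in_K d S pis Ls i (emp_edge n xs)}"
definition "Rs = rev_kl A pp P (tensor d (Ls(i:=Lstar)))"
definition "wt n xs = mu (xs 1) * (\<Prod>k\<in>{1..<n}. P (xs k) (xs (Suc k)))"

lemma mc_eq: "mc_prob (prod_space d S) mu P n (\<lambda>xs. in_K d S pis Ls i (emp_edge n xs)) = (\<Sum>xs\<in>Ev n. wt n xs)"
  by (simp add: mc_prob_def Ev_def wt_def A_def)

lemma Ev_witness:
  assumes "xs \<in> Ev n"
  obtains M where "is_trans (S i) M" "\<forall>x\<in>A. \<forall>y\<in>A. emp_edge n xs x y = pp x * tensor d (Ls(i:=M)) x y"
  using assms by (auto simp: Ev_def in_K_def A_def pp_def)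

lemma mu0: "x \<in> A \<Longrightarrow> 0 \<le> mu x" using mu_distr by (auto simp: is_distr_def A_def)

lemma wt_zero_or:
  assumes n1: "1 \<le> n" and nbig: "2 / c0 \<le> real n" and xs: "xs \<in> Ev n"
  shows "wt n xs = 0 \<or> (\<exists>\<rho> M. Rs \<le> ereal \<rho> \<and> is_trans (S i) M \<and>
      (\<forall>x\<in>A. \<forall>y\<in>A. emp_edge n xs x y = pp x * tensor d (Ls(i:=M)) x y) \<and>
      wt n xs \<le> exp (C1 + C2 * ln (real n) - real n * \<rho>) * (mu (xs 1) * (\<Prod>k\<in>{1..<n}. tensor d (Ls(i:=M)) (xs k) (xs (Suc k)))))"
proof (cases "\<forall>k\<in>{1..<n}. 0 < P (xs k) (xs (Suc k))")
  case True
  obtain M where M: "is_trans (S i) M" "\<forall>x\<in>A. \<forall>y\<in>A. emp_edge n xs x y = pp x * tensor d (Ls(i:=M)) x y"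
    using Ev_witness[OF xs] by blast
  have xsP: "xs \<in> PiE {1..n} (\<lambda>_. A)" using xs by (simp add: Ev_def)
  obtain L \<rho> where L: "is_trans (S i) L" "rev_kl A pp P (tensor d (Ls(i:=L))) = ereal \<rho>"
    and b: "(\<Prod>k\<in>{1..<n}. P (xs k) (xs (Suc k)))
       \<le> exp (C1 + C2 * ln (real n) - real n * \<rho>) * (\<Prod>k\<in>{1..<n}. tensor d (Ls(i:=M)) (xs k) (xs (Suc k)))"
    using path_bound[OF n1 nbig xsP M True] by blast
  have "Rs \<le> ereal \<rho>" using Lstar_min L by (auto simp: Rs_def A_def pp_def)
  moreover have "wt n xs \<le> exp (C1 + C2 * ln (real n) - real n * \<rho>) * (mu (xs 1) * (\<Prod>k\<in>{1..<n}. tensor d (Ls(i:=M)) (xs k) (xs (Suc k))))"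
  proof -
    have "0 \<le> mu (xs 1)" using xsP n1 by (intro mu0) auto
    then have "wt n xs \<le> mu (xs 1) * (exp (C1 + C2 * ln (real n) - real n * \<rho>) * (\<Prod>k\<in>{1..<n}. tensor d (Ls(i:=M)) (xs k) (xs (Suc k))))"
      unfolding wt_def by (rule mult_left_mono[OF b])
    then show ?thesis by (simp add: algebra_simps)
  qed
  ultimately show ?thesis using M by blast
next
  case False
  then obtain k where k: "k \<in> {1..<n}" "\<not> 0 < P (xs k) (xs (Suc k))" by blast
  have xsP: "xs \<in> PiE {1..n} (\<lambda>_. A)" using xs by (simp add: Ev_def)
  then have "xs k \<in> A" "xs (Suc k) \<in> A" using k by auto
  then have "P (xs k) (xs (Suc k)) = 0" using P_nonneg k(2) by force
  then have "(\<Prod>k\<in>{1..<n}. P (xs k) (xs (Suc k))) = 0"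
    using k(1) by (intro prod_zero) auto
  then show ?thesis by (simp add: wt_def)
qed

lemma Ev_zero:
  assumes n1: "1 \<le> n" and nbig: "2 / c0 \<le> real n" and R: "Rs = \<infinity>"
  shows "(\<Sum>xs\<in>Ev n. wt n xs) = 0"
proof (rule sum.neutral, rule ballI)
  fix xs assume "xs \<in> Ev n"
  from wt_zero_or[OF n1 nbig this] show "wt n xs = 0" using R by auto
qed

definition "Ep n xs = restrict (\<lambda>(a,b). emp_edge n xs a b) (A \<times> A)"
definition "Qv (\<nu> :: (nat \<Rightarrow> 'a) \<times> (nat \<Rightarrow> 'a) \<Rightarrow> real) x y = \<nu> (x, y) / pp x"
definition "Vn (n::nat) = (\<lambda>k. real k / real n) ` {0..n}"

lemma Ep_types:
  assumes xs: "xs \<in> PiE {1..n} (\<lambda>_. A)" and n1: "1 \<le> n"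
  shows "Ep n xs \<in> PiE (A \<times> A) (\<lambda>_. Vn n)"
proof -
  have "emp_edge n xs a b \<in> Vn n" for a b
  proof -
    define k where "k = cnt n xs a b + (if xs n = a \<and> xs 1 = b then 1 else 0)"
    have "emp_edge n xs a b = real k / real n" by (simp add: emp_edge_cnt k_def)
    moreover have "k \<le> n" using cnt_le[of n xs a b] n1 by (auto simp: k_def)
    ultimately show ?thesis by (auto simp: Vn_def)
  qed
  then show ?thesis by (auto simp: Ep_def)
qed

lemma card_types: "real (card (PiE (A \<times> A) (\<lambda>_. Vn n))) \<le> real (n + 1) ^ K"
proof -
  have "card (PiE (A \<times> A) (\<lambda>_. Vn n)) = card (Vn n) ^ card (A \<times> A)"
    using finA by (simp add: card_PiE)
  also have "card (A \<times> A) = K" by (simp add: K_def card_cartesian_product)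
  finally have e: "card (PiE (A \<times> A) (\<lambda>_. Vn n)) = card (Vn n) ^ K" .
  have "card (Vn n) \<le> n + 1" unfolding Vn_def using card_image_le[of "{0..n}" "\<lambda>k. real k / real n"] by simp
  then have "card (Vn n) ^ K \<le> (n + 1) ^ K" by (rule power_mono) simp
  then show ?thesis unfolding e by (metis of_nat_le_iff of_nat_power)
qed

lemma Qv_Ep:
  assumes "x \<in> A" "y \<in> A"
    and "\<forall>x\<in>A. \<forall>y\<in>A. emp_edge n xs x y = pp x * tensor d (Ls(i:=M)) x y"
  shows "Qv (Ep n xs) x y = tensor d (Ls(i:=M)) x y"
  using assms pp_pos[OF assms(1)] by (simp add: Qv_def Ep_def)

lemma group_le1:
  assumes n1: "1 \<le> n"
  shows "(\<Sum>xs\<in>{xs. xs \<in> Ev n \<and> Ep n xs = \<nu>}. mu (xs 1) * (\<Prod>k\<in>{1..<n}. Qv \<nu> (xs k) (xs (Suc k)))) \<le> 1"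
proof (cases "{xs. xs \<in> Ev n \<and> Ep n xs = \<nu>} = {}")
  case True then show ?thesis unfolding True by simp
next
  case False
  then obtain xs0 where xs0: "xs0 \<in> Ev n" "Ep n xs0 = \<nu>" by blast
  obtain M where M: "is_trans (S i) M" "\<forall>x\<in>A. \<forall>y\<in>A. emp_edge n xs0 x y = pp x * tensor d (Ls(i:=M)) x y"
    using Ev_witness[OF xs0(1)] by blast
  have Qeq: "\<And>x y. x \<in> A \<Longrightarrow> y \<in> A \<Longrightarrow> Qv \<nu> x y = tensor d (Ls(i:=M)) x y"
    using Qv_Ep[OF _ _ M(2)] xs0(2) by blast
  have Qtr: "is_trans A (Qv \<nu>)"
    using T_trans[OF M(1)] Qeq by (simp add: is_trans_def)
  obtain n' where n': "n = Suc n'" using n1 by (cases n) auto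
  have nn: "0 \<le> mu (xs 1) * (\<Prod>k\<in>{1..<n}. Qv \<nu> (xs k) (xs (Suc k)))"
    if "xs \<in> PiE {1..n} (\<lambda>_. A)" for xs
  proof -
    have xsA: "\<And>k. k \<in> {1..n} \<Longrightarrow> xs k \<in> A" using that by auto
    have "0 \<le> mu (xs 1)" using xsA n1 mu0 by auto
    moreover have "0 \<le> (\<Prod>k\<in>{1..<n}. Qv \<nu> (xs k) (xs (Suc k)))"
      using Qtr xsA by (intro prod_nonneg) (auto simp: is_trans_def)
    ultimately show ?thesis by simp
  qed
  have "(\<Sum>xs\<in>{xs. xs \<in> Ev n \<and> Ep n xs = \<nu>}. mu (xs 1) * (\<Prod>k\<in>{1..<n}. Qv \<nu> (xs k) (xs (Suc k))))
      \<le> (\<Sum>xs\<in>PiE {1..n} (\<lambda>_. A). mu (xs 1) * (\<Prod>k\<in>{1..<n}. Qv \<nu> (xs k) (xs (Suc k))))"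
    by (rule sum_mono2) (use nn in \<open>auto simp: Ev_def finA intro!: finite_PiE\<close>)
  also have "\<dots> = 1"
    unfolding n' by (rule path_sum[OF finA Qtr]) (use mu_distr in \<open>simp add: A_def\<close>)
  finally show ?thesis .
qed

lemma Ev_bound:
  assumes n1: "1 \<le> n" and nbig: "2 / c0 \<le> real n" and R: "Rs = ereal r"
  shows "(\<Sum>xs\<in>Ev n. wt n xs) \<le> real (n + 1) ^ K * exp (C1 + C2 * ln (real n) - real n * r)"
proof -
  define B where "B = exp (C1 + C2 * ln (real n) - real n * r)"
  define h where "h xs = mu (xs 1) * (\<Prod>k\<in>{1..<n}. Qv (Ep n xs) (xs k) (xs (Suc k)))" for xs
  have finEv: "finite (Ev n)" using finA by (auto simp: Ev_def intro!: finite_PiE)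
  have wb: "wt n xs \<le> B * h xs" if xs: "xs \<in> Ev n" for xs
  proof -
    have xsP: "xs \<in> PiE {1..n} (\<lambda>_. A)" using xs by (simp add: Ev_def)
    then have xsA: "\<And>k. k \<in> {1..n} \<Longrightarrow> xs k \<in> A" by auto
    have ep0: "0 \<le> Qv (Ep n xs) x y" if "x \<in> A" "y \<in> A" for x y
    proof -
      have "0 \<le> emp_edge n xs x y" by (simp add: emp_edge_def)
      then show ?thesis using that pp_pos[of x] by (simp add: Qv_def Ep_def)
    qed
    have h0: "0 \<le> h xs"
      unfolding h_def using xsA n1 mu0 ep0 by (intro mult_nonneg_nonneg prod_nonneg) auto
    from wt_zero_or[OF n1 nbig xs] show ?thesis
    proof
      assume "wt n xs = 0" then show ?thesis using h0 by (simp add: B_def)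
    next
      assume "\<exists>\<rho> M. Rs \<le> ereal \<rho> \<and> is_trans (S i) M \<and>
        (\<forall>x\<in>A. \<forall>y\<in>A. emp_edge n xs x y = pp x * tensor d (Ls(i:=M)) x y) \<and>
        wt n xs \<le> exp (C1 + C2 * ln (real n) - real n * \<rho>) * (mu (xs 1) * (\<Prod>k\<in>{1..<n}. tensor d (Ls(i:=M)) (xs k) (xs (Suc k))))"
      then obtain \<rho> M where rr: "Rs \<le> ereal \<rho>"
        and M: "\<forall>x\<in>A. \<forall>y\<in>A. emp_edge n xs x y = pp x * tensor d (Ls(i:=M)) x y"
        and b: "wt n xs \<le> exp (C1 + C2 * ln (real n) - real n * \<rho>) * (mu (xs 1) * (\<Prod>k\<in>{1..<n}. tensor d (Ls(i:=M)) (xs k) (xs (Suc k))))"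
        by blast
      have "r \<le> \<rho>" using rr R by simp
      have hh: "mu (xs 1) * (\<Prod>k\<in>{1..<n}. tensor d (Ls(i:=M)) (xs k) (xs (Suc k))) = h xs"
        unfolding h_def using Qv_Ep[OF _ _ M] xsA by (intro arg_cong[where f="\<lambda>z. mu (xs 1) * z"] prod.cong) auto
      have "exp (C1 + C2 * ln (real n) - real n * \<rho>) \<le> B"
        using \<open>r \<le> \<rho>\<close> n1 by (simp add: B_def mult_left_mono)
      then have "exp (C1 + C2 * ln (real n) - real n * \<rho>) * h xs \<le> B * h xs"
        by (rule mult_right_mono[OF _ h0])
      moreover have "wt n xs \<le> exp (C1 + C2 * ln (real n) - real n * \<rho>) * h xs"
        using b unfolding hh .
      ultimately show ?thesis by linarith
    qed
  qed
  have "(\<Sum>xs\<in>Ev n. wt n xs) \<le> (\<Sum>xs\<in>Ev n. B * h xs)" using wb by (rule sum_mono)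
  also have "\<dots> = B * (\<Sum>xs\<in>Ev n. h xs)" by (simp add: sum_distrib_left)
  also have "(\<Sum>xs\<in>Ev n. h xs) = (\<Sum>\<nu>\<in>PiE (A \<times> A) (\<lambda>_. Vn n). \<Sum>xs\<in>{xs. xs \<in> Ev n \<and> Ep n xs = \<nu>}. h xs)"
    by (rule sum.group[symmetric]) (use finEv finA Ep_types n1 in \<open>auto simp: Ev_def Vn_def intro!: finite_PiE\<close>)
  also have "\<dots> \<le> (\<Sum>\<nu>\<in>PiE (A \<times> A) (\<lambda>_. Vn n). 1)"
  proof (rule sum_mono)
    fix \<nu>
    have "(\<Sum>xs\<in>{xs. xs \<in> Ev n \<and> Ep n xs = \<nu>}. h xs)
        = (\<Sum>xs\<in>{xs. xs \<in> Ev n \<and> Ep n xs = \<nu>}. mu (xs 1) * (\<Prod>k\<in>{1..<n}. Qv \<nu> (xs k) (xs (Suc k))))"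
      by (rule sum.cong) (auto simp: h_def)
    also have "\<dots> \<le> 1" by (rule group_le1[OF n1])
    finally show "(\<Sum>xs\<in>{xs. xs \<in> Ev n \<and> Ep n xs = \<nu>}. h xs) \<le> 1" .
  qed
  also have "\<dots> = real (card (PiE (A \<times> A) (\<lambda>_. Vn n)))" by simp
  finally have "(\<Sum>xs\<in>Ev n. wt n xs) \<le> B * real (card (PiE (A \<times> A) (\<lambda>_. Vn n)))"
    by (simp add: B_def mult_left_mono)
  also have "\<dots> \<le> B * real (n + 1) ^ K" by (rule mult_left_mono[OF card_types]) (simp add: B_def)
  finally show ?thesis by (simp add: B_def mult.commute)
qed

end



lemma limsup_real:
  fixes p :: "nat \<Rightarrow> real" and a b r :: real
  assumes ev: "eventually (\<lambda>n. p n \<le> exp (a + b * ln (real n) - real n * r)) sequentially"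
  shows "limsup (\<lambda>n. eln (p n) / ereal (real n)) \<le> ereal (- r)"
proof -
  have lim: "(\<lambda>n. a / real n + b * (ln (real n) / real n) - r) \<longlonglongrightarrow> 0 + b * 0 - r"
    by (intro tendsto_intros lim_ln_over_n real_tendsto_divide_at_top filterlim_real_sequentially)
  have "eventually (\<lambda>n. eln (p n) / ereal (real n) \<le> ereal (a / real n + b * (ln (real n) / real n) - r)) sequentially"
    using ev eventually_gt_at_top[of 0]
  proof eventually_elim
    case (elim n)
    then have npos: "0 < real n" by simp
    show ?case
    proof (cases "p n \<le> 0")
      case True
      then show ?thesis using npos by (simp add: eln_def divide_ereal_def)
    next
      case False
      then have pp: "0 < p n" by simp
      have "ln (p n) \<le> ln (exp (a + b * ln (real n) - real n * r))"
        using elim(1) pp by (subst ln_le_cancel_iff) auto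
      then have "ln (p n) \<le> a + b * ln (real n) - real n * r" by simp
      then have "ln (p n) / real n \<le> (a + b * ln (real n) - real n * r) / real n"
        using npos by (intro divide_right_mono) auto
      also have "\<dots> = a / real n + b * (ln (real n) / real n) - r"
        using npos by (simp add: field_simps)
      finally show ?thesis using pp npos by (simp add: eln_def divide_ereal_def divide_inverse)
    qed
  qed
  then have "limsup (\<lambda>n. eln (p n) / ereal (real n)) \<le> limsup (\<lambda>n. ereal (a / real n + b * (ln (real n) / real n) - r))"
    by (rule Limsup_mono)
  also have "\<dots> = ereal (- r)"
    by (rule lim_imp_Limsup) (use lim in auto)
  finally show ?thesis .
qed

lemma limsup_minf:
  fixes p :: "nat \<Rightarrow> real"
  assumes ev: "eventually (\<lambda>n. p n = 0) sequentially"
  shows "limsup (\<lambda>n. eln (p n) / ereal (real n)) \<le> z"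
proof -
  have "eventually (\<lambda>n. eln (p n) / ereal (real n) \<le> (\<lambda>_. - \<infinity>) n) sequentially"
    using ev eventually_gt_at_top[of 0]
    by eventually_elim (simp add: eln_def divide_ereal_def)
  then have "limsup (\<lambda>n. eln (p n) / ereal (real n)) \<le> limsup (\<lambda>_. - \<infinity> :: ereal)"
    by (rule Limsup_mono)
  also have "\<dots> = - \<infinity>" by (simp add: Limsup_const)
  finally show ?thesis by simp
qed

context tctx
begin

lemma eventually_big: "eventually (\<lambda>n. 1 \<le> n \<and> 2 / c0 \<le> real n) sequentially"
proof -
  have "eventually (\<lambda>n. nat \<lceil>2 / c0\<rceil> + 1 \<le> n) sequentially" by (rule eventually_ge_at_top)
  then show ?thesis
  proof eventually_elim
    case (elim n)
    have "2 / c0 \<le> real (nat \<lceil>2 / c0\<rceil>)" by linarith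
    then show ?case using elim by linarith
  qed
qed

lemma main_bound:
  "limsup (\<lambda>n. eln (\<Sum>xs\<in>Ev n. wt n xs) / ereal (real n)) \<le> - Rs"
proof (cases Rs)
  case (real r)
  have "eventually (\<lambda>n. (\<Sum>xs\<in>Ev n. wt n xs) \<le> exp ((real K * ln 2 + C1) + (real K + C2) * ln (real n) - real n * r)) sequentially"
    using eventually_big
  proof eventually_elim
    case (elim n)
    then have n1: "1 \<le> n" and nb: "2 / c0 \<le> real n" by auto
    have npos: "0 < real n" using n1 by simp
    have "(\<Sum>xs\<in>Ev n. wt n xs) \<le> real (n + 1) ^ K * exp (C1 + C2 * ln (real n) - real n * r)"
      by (rule Ev_bound[OF n1 nb real])
    also have "real (n + 1) ^ K \<le> (2 * real n) ^ K"
      using n1 by (intro power_mono) auto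
    then have "real (n + 1) ^ K * exp (C1 + C2 * ln (real n) - real n * r) \<le> (2 * real n) ^ K * exp (C1 + C2 * ln (real n) - real n * r)"
      by (rule mult_right_mono) simp
    also have "(2 * real n) ^ K = exp (real K * ln 2 + real K * ln (real n))"
    proof -
      have "(2 * real n) ^ K = exp (ln ((2 * real n) ^ K))" using npos by simp
      also have "ln ((2 * real n) ^ K) = real K * ln 2 + real K * ln (real n)"
        using npos by (simp add: ln_realpow ln_mult algebra_simps)
      finally show ?thesis .
    qed
    also have "exp (real K * ln 2 + real K * ln (real n)) * exp (C1 + C2 * ln (real n) - real n * r)
        = exp ((real K * ln 2 + C1) + (real K + C2) * ln (real n) - real n * r)"
      by (simp add: exp_add[symmetric] algebra_simps)
    finally show ?case .
  qed
  then have "limsup (\<lambda>n. eln (\<Sum>xs\<in>Ev n. wt n xs) / ereal (real n)) \<le> ereal (- r)"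
    by (rule limsup_real)
  then show ?thesis using real by simp
next
  case PInf
  have "eventually (\<lambda>n. (\<Sum>xs\<in>Ev n. wt n xs) = 0) sequentially"
    using eventually_big by eventually_elim (use Ev_zero PInf in auto)
  then show ?thesis by (rule limsup_minf)
next
  case MInf
  then show ?thesis by simp
qed

end


theorem theorem2p12:
  fixes d i :: nat
    and S :: "nat \<Rightarrow> 'a set"
    and pis :: "nat \<Rightarrow> 'a \<Rightarrow> real"
    and P :: "(nat \<Rightarrow> 'a) \<Rightarrow> (nat \<Rightarrow> 'a) \<Rightarrow> real"
    and Ls :: "nat \<Rightarrow> 'a \<Rightarrow> 'a \<Rightarrow> real"
    and Lstar :: "'a \<Rightarrow> 'a \<Rightarrow> real"
    and mu :: "(nat \<Rightarrow> 'a) \<Rightarrow> real"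
  assumes fin: "\<forall>l<d. finite (S l) \<and> S l \<noteq> {}"
    and i: "i < d"
    and pis_distr: "\<forall>l<d. is_distr (S l) (pis l)"
    and pis_pos: "\<forall>l<d. \<forall>a\<in>S l. 0 < pis l a"
    and P_trans: "is_trans (prod_space d S) P"
    and P_stat: "is_stationary (prod_space d S) (prod_distr d pis) P"
    and Ls_trans: "\<forall>j<d. j \<noteq> i \<longrightarrow> is_trans (S j) (Ls j)"
    and Ls_stat: "\<forall>j<d. j \<noteq> i \<longrightarrow> is_stationary (S j) (pis j) (Ls j)"
    and Lstar_trans: "is_trans (S i) Lstar"
    and Lstar_min: "\<forall>L. is_trans (S i) L \<longrightarrow>
          rev_kl (prod_space d S) (prod_distr d pis) P (tensor d (Ls(i := Lstar)))
            \<le> rev_kl (prod_space d S) (prod_distr d pis) P (tensor d (Ls(i := L)))"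
    and mu_distr: "is_distr (prod_space d S) mu"
  shows "limsup (\<lambda>n. eln (mc_prob (prod_space d S) mu P n
                     (\<lambda>xs. in_K d S pis Ls i (emp_edge n xs))) / ereal (real n))
         \<le> - rev_kl (prod_space d S) (prod_distr d pis) P (tensor d (Ls(i := Lstar)))"
proof -
  interpret tctx d i S pis P Ls Lstar mu
    by unfold_locales (use fin i pis_distr pis_pos P_trans Ls_trans Lstar_trans Lstar_min mu_distr in auto)
  show ?thesis
    unfolding mc_eq using main_bound unfolding Rs_def A_def pp_def .
qed

end
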